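(* Let $\alpha=(\alpha_1,\dots,\alpha_t)\in\mathcal{P}(n)$ with $\delta(\alpha)=\big(1,2,\dots,q,q^{(s_q)},(q-1)^{(s_{q-1})},\dots,1^{(s_1)}\big)$, let $\overline{\alpha}=(\overline{\alpha}_1,\dots,\overline{\alpha}_q)$ with $\overline{\alpha}_i=q-i+1+\sum_{k=i}^q s_k$, and let $\underline{\alpha}=\overline{\alpha}^*$. If $\alpha\neq\overline{\alpha}$, then $\alpha_i=\alpha_{i+1}$ for some $1\le i\le t$. Equivalently, if $\alpha\neq\underline{\alpha}$, then $\alpha_i-\alpha_{i+1}>1$ for some $1\le i\le t$ (with the convention $\alpha_{t+1}=0$).
   Context: A partition of a positive integer $n$ is a finite non-increasing sequence $\alpha=(\alpha_1,\dots,\alpha_t)$ of positive integers with sum $n$; $\mathcal{P}(n)$ is the set of partitions of $n$, and $\alpha_i=0$ for $i>t$. The diagonal sequence is $\delta(\alpha)=(d_k)_{k\ge1}$ with $d_k=|\{i:1\le i\le k,\ \alpha_i+i-1\ge k\}|$, trailing zeros omitted; every diagonal sequence has the stated form for some $q\ge1$ and integers $s_1,\dots,s_q\ge0$, where $j^{(s)}$ denotes $s$ consecutive entries equal to $j$. The conjugate $\beta^*$ of a partition $\beta$ has parts $\beta^*_j=|\{i:\beta_i\ge j\}|$. *)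

theory Defs
  imports Main
begin

definition is_partition :: "nat \<Rightarrow> nat list \<Rightarrow> bool" where
  "is_partition n a \<longleftrightarrow> 0 < n \<and> sorted_wrt (\<ge>) a \<and> (\<forall>x\<in>set a. 0 < x) \<and> sum_list a = n"

text \<open>1-based part access, with alpha_i = 0 for i > t (and for i = 0).\<close>
definition part :: "nat list \<Rightarrow> nat \<Rightarrow> nat" where
  "part a i = (if 1 \<le> i \<and> i \<le> length a then a ! (i - 1) else 0)"

definition diag :: "nat list \<Rightarrow> nat \<Rightarrow> nat" where
  "diag a k = card {i. 1 \<le> i \<and> i \<le> k \<and> part a i + i - 1 \<ge> k}"

definition diag_shape :: "nat \<Rightarrow> (nat \<Rightarrow> nat) \<Rightarrow> nat list" where
  "diag_shape q s = [1..<q+1] @ concat (map (\<lambda>j. replicate (s j) j) (rev [1..<q+1]))"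

text \<open>delta(a) = L (trailing zeros omitted): the k-th entry equals the k-th element of L
  for k <= |L| and is 0 afterwards.\<close>
definition diag_seq_is :: "nat list \<Rightarrow> nat list \<Rightarrow> bool" where
  "diag_seq_is a L \<longleftrightarrow> (\<forall>k\<ge>1. diag a k = (if k \<le> length L then L ! (k - 1) else 0))"

definition alpha_bar :: "nat \<Rightarrow> (nat \<Rightarrow> nat) \<Rightarrow> nat list" where
  "alpha_bar q s = map (\<lambda>i. q - i + 1 + (\<Sum>k=i..q. s k)) [1..<q+1]"

definition conj_part :: "nat list \<Rightarrow> nat list" where
  "conj_part b = map (\<lambda>j. length (filter (\<lambda>x. j \<le> x) b)) [1..<part b 1 + 1]"

end

theory Submission imports Defs begin

definition Rl :: "(nat \<Rightarrow> nat) \<Rightarrow> nat \<Rightarrow> nat list" where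
  "Rl s q = concat (map (\<lambda>j. replicate (s j) j) (rev [1..<q+1]))"

lemma Rl_0: "Rl s 0 = []" by (simp add: Rl_def)
lemma Rl_Suc: "Rl s (Suc q) = replicate (s (Suc q)) (Suc q) @ Rl s q"
  by (simp add: Rl_def)

lemma Rl_len: "length (Rl s q) = (\<Sum>j=1..q. s j)"
  by (induction q) (simp_all add: Rl_0 Rl_Suc)

lemma Rl_set: "set (Rl s q) \<subseteq> {1..q}"
  by (induction q) (auto simp: Rl_0 Rl_Suc)

lemma Rl_nth: "m < length (Rl s q) \<Longrightarrow> 1 \<le> i \<Longrightarrow> i \<le> q \<Longrightarrow>
   (i \<le> Rl s q ! m \<longleftrightarrow> m < (\<Sum>j=i..q. s j))"
proof (induction q arbitrary: m i)
  case 0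
  then show ?case by simp
next
  case (Suc q)
  have nth: "Rl s (Suc q) ! m = (if m < s (Suc q) then Suc q else Rl s q ! (m - s (Suc q)))"
    by (simp add: Rl_Suc nth_append)
  show ?case
  proof (cases "i = Suc q")
    case True
    have "Rl s q ! (m - s (Suc q)) \<le> q" if "\<not> m < s (Suc q)"
    proof -
      have "m - s (Suc q) < length (Rl s q)" using Suc.prems(1) that by (simp add: Rl_Suc)
      then have "Rl s q ! (m - s (Suc q)) \<in> {1..q}" using Rl_set nth_mem by blast
      then show ?thesis by simp
    qed
    then show ?thesis using True nth by auto
  next
    case False
    then have iq: "i \<le> q" using Suc.prems by simp
    have sum: "(\<Sum>j=i..Suc q. s j) = (\<Sum>j=i..q. s j) + s (Suc q)"
      using iq by (simp add: sum.cl_ivl_Suc)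
    show ?thesis
    proof (cases "m < s (Suc q)")
      case True
      then show ?thesis using nth sum iq by simp
    next
      case False
      have "m - s (Suc q) < length (Rl s q)" using Suc.prems(1) False by (simp add: Rl_Suc)
      from Suc.IH[OF this Suc.prems(2) iq] show ?thesis using nth sum False by auto
    qed
  qed
qed

lemma ds_eq: "diag_shape q s = [1..<q+1] @ Rl s q"
  by (simp add: diag_shape_def Rl_def)

lemma ds_len: "length (diag_shape q s) = q + (\<Sum>j=1..q. s j)"
  by (simp add: ds_eq Rl_len)

lemma ds_q: "1 \<le> q \<Longrightarrow> diag_shape q s ! (q - 1) = q"
  by (simp add: ds_eq nth_append)

lemma ds_le: "q < length (diag_shape q s) \<Longrightarrow> diag_shape q s ! q \<le> q"
proof -
  assume a: "q < length (diag_shape q s)"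
  have "0 < length (Rl s q)" using a by (simp add: ds_len Rl_len)
  then have "Rl s q ! 0 \<in> {1..q}" using Rl_set nth_mem by blast
  moreover have "diag_shape q s ! q = Rl s q ! 0" by (simp add: ds_eq nth_append del: upt_Suc)
  ultimately show ?thesis by simp
qed

lemma ds_G: assumes "q < k" "1 \<le> i" "i \<le> q"
  shows "(i \<le> (if k \<le> length (diag_shape q s) then diag_shape q s ! (k-1) else 0))
     \<longleftrightarrow> k \<le> q + (\<Sum>j=i..q. s j)"
proof (cases "k \<le> length (diag_shape q s)")
  case True
  have nth: "diag_shape q s ! (k-1) = Rl s q ! (k - 1 - q)"
  proof -
    have "\<not> k - 1 < q" using assms by simp
    then show ?thesis by (simp add: ds_eq nth_append del: upt_Suc)
  qed
  have "k - 1 - q < length (Rl s q)" using True assms by (simp add: ds_len Rl_len)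
  from Rl_nth[OF this assms(2,3)] show ?thesis using True nth assms by auto
next
  case False
  have "(\<Sum>j=i..q. s j) \<le> (\<Sum>j=1..q. s j)"
    using assms by (intro sum_mono2) auto
  then show ?thesis using False assms by (simp add: ds_len)
qed

lemma core:
  fixes f :: "nat \<Rightarrow> nat" and t q :: nat
  assumes pos: "\<And>i. 1 \<le> i \<Longrightarrow> (0 < f i \<longleftrightarrow> i \<le> t)"
  and strict: "\<And>i. 1 \<le> i \<Longrightarrow> i < t \<Longrightarrow> f (Suc i) < f i"
  and dg: "\<And>k. 1 \<le> k \<Longrightarrow> card {i. 1 \<le> i \<and> i \<le> k \<and> f i + i - 1 \<ge> k}
      = (if k \<le> length (diag_shape q s) then diag_shape q s ! (k-1) else 0)"
  and q: "1 \<le> q"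
  shows "t = q \<and> (\<forall>i. 1 \<le> i \<longrightarrow> i \<le> q \<longrightarrow> f i = q - i + 1 + (\<Sum>k=i..q. s k))"
proof -
  define e where "e i = f i + i - 1" for i
  have emono: "e j \<le> e i" if "1 \<le> i" "i \<le> j" "j \<le> t" for i j
    using that(2,3)
  proof (induction j rule: dec_induct)
    case base
    then show ?case by simp
  next
    case (step m)
    have "f (Suc m) < f m" using strict[of m] step that(1) by auto
    then show ?case using step unfolding e_def by auto
  qed
  have ege: "i \<le> e i" if "1 \<le> i" "i \<le> t" for i
    using pos[of i] that unfolding e_def by auto
  have Deq: "{i. 1 \<le> i \<and> i \<le> k \<and> f i + i - 1 \<ge> k} = {i. 1 \<le> i \<and> i \<le> k \<and> i \<le> t \<and> e i \<ge> k}" for k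
  proof -
    have "i \<le> t" if "1 \<le> i" "i \<le> k" "f i + i - 1 \<ge> k" for i
      using pos[of i] that by (cases "f i = 0") auto
    then show ?thesis unfolding e_def by blast
  qed
  let ?L = "diag_shape q s"
  have tq1: "t \<le> q"
  proof (rule ccontr)
    assume nt: "\<not> t \<le> q"
    have "{i. 1 \<le> i \<and> i \<le> Suc q \<and> i \<le> t \<and> e i \<ge> Suc q} = {1..Suc q}"
    proof -
      have "e i \<ge> Suc q" if "1 \<le> i" "i \<le> Suc q" for i
        using emono[of i "Suc q"] ege[of "Suc q"] that nt by auto
      then show ?thesis using nt by auto
    qed
    then have "card {i. 1 \<le> i \<and> i \<le> Suc q \<and> f i + i - 1 \<ge> Suc q} = Suc q"
      using Deq by simp
    moreover have "(if Suc q \<le> length ?L then ?L ! (Suc q - 1) else 0) \<le> q"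
      using ds_le[of q s] by auto
    ultimately show False using dg[of "Suc q"] by simp
  qed
  have tq2: "q \<le> t"
  proof -
    have "card {i. 1 \<le> i \<and> i \<le> q \<and> f i + i - 1 \<ge> q} = q"
      using dg[of q] q ds_q[OF q, of s] ds_len[of q s] by simp
    moreover have sub: "{i. 1 \<le> i \<and> i \<le> q \<and> f i + i - 1 \<ge> q} \<subseteq> {1..t}"
      unfolding Deq[of q] by auto
    have "card {i. 1 \<le> i \<and> i \<le> q \<and> f i + i - 1 \<ge> q} \<le> card {1..t}"
      by (rule card_mono[OF _ sub]) simp
    ultimately show ?thesis by simp
  qed
  have tq: "t = q" using tq1 tq2 by simp
  have key: "i \<le> card {j. 1 \<le> j \<and> j \<le> k \<and> j \<le> t \<and> e j \<ge> k} \<longleftrightarrow> k \<le> e i"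
    if "q < k" "1 \<le> i" "i \<le> q" for i k
  proof -
    have S: "{j. 1 \<le> j \<and> j \<le> k \<and> j \<le> t \<and> e j \<ge> k} = {j. 1 \<le> j \<and> j \<le> q \<and> e j \<ge> k}"
      using that tq by auto
    have fin: "finite {j. 1 \<le> j \<and> j \<le> q \<and> e j \<ge> k}"
      by (rule finite_subset[of _ "{1..q}"]) auto
    show ?thesis
    proof
      assume "k \<le> e i"
      then have "{1..i} \<subseteq> {j. 1 \<le> j \<and> j \<le> q \<and> e j \<ge> k}"
        using emono that tq by force
      then show "i \<le> card {j. 1 \<le> j \<and> j \<le> k \<and> j \<le> t \<and> e j \<ge> k}"
      proof -
        assume sub: "{1..i} \<subseteq> {j. 1 \<le> j \<and> j \<le> q \<and> e j \<ge> k}"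
        have "card {1..i} \<le> card {j. 1 \<le> j \<and> j \<le> q \<and> e j \<ge> k}"
          by (rule card_mono[OF fin sub])
        then show ?thesis unfolding S by simp
      qed
    next
      assume a: "i \<le> card {j. 1 \<le> j \<and> j \<le> k \<and> j \<le> t \<and> e j \<ge> k}"
      show "k \<le> e i"
      proof (rule ccontr)
        assume nk: "\<not> k \<le> e i"
        have "{j. 1 \<le> j \<and> j \<le> q \<and> e j \<ge> k} \<subseteq> {1..i-1}"
        proof
          fix j assume "j \<in> {j. 1 \<le> j \<and> j \<le> q \<and> e j \<ge> k}"
          then have j: "1 \<le> j" "j \<le> q" "e j \<ge> k" by auto
          have "\<not> i \<le> j"
          proof
            assume "i \<le> j"
            then have "e j \<le> e i" using emono[of i j] that tq j by simp
            then show False using nk j by simp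
          qed
          then show "j \<in> {1..i-1}" using j by simp
        qed
        then have "card {j. 1 \<le> j \<and> j \<le> q \<and> e j \<ge> k} \<le> card {1..i-1}"
          by (intro card_mono) simp_all
        then have "card {j. 1 \<le> j \<and> j \<le> q \<and> e j \<ge> k} \<le> i - 1" by simp
        then show False using a S that by simp
      qed
    qed
  qed
  have eval: "e i = q + (\<Sum>j=i..q. s j)" if "1 \<le> i" "i \<le> q" for i
  proof -
    have iff: "k \<le> e i \<longleftrightarrow> k \<le> q + (\<Sum>j=i..q. s j)" if "q < k" for k
      using key[OF that \<open>1 \<le> i\<close> \<open>i \<le> q\<close>] ds_G[OF that \<open>1 \<le> i\<close> \<open>i \<le> q\<close>, of s]
        dg[of k] Deq[of k] that by simp
    have "e i \<ge> q" using emono[of i q] ege[of q] that q tq by auto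
    moreover have "e i \<le> q + (\<Sum>j=i..q. s j)"
      using iff[of "q + (\<Sum>j=i..q. s j) + 1"] by auto
    moreover have "q + (\<Sum>j=i..q. s j) \<le> e i"
      using iff[of "q + (\<Sum>j=i..q. s j)"] \<open>e i \<ge> q\<close> by (cases "(\<Sum>j=i..q. s j) = 0") auto
    ultimately show ?thesis by simp
  qed
  show ?thesis
  proof (intro conjI allI impI)
    show "t = q" by (rule tq)
  next
    fix i assume "1 \<le> i" "i \<le> q"
    from eval[OF this] show "f i = q - i + 1 + (\<Sum>k=i..q. s k)"
      unfolding e_def using \<open>1 \<le> i\<close> \<open>i \<le> q\<close> by simp
  qed
qed

lemma part_nth: "1 \<le> i \<Longrightarrow> i \<le> length a \<Longrightarrow> part a i = a ! (i - 1)"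
  by (simp add: part_def)

lemma part_pos: assumes "is_partition n a" "1 \<le> i"
  shows "0 < part a i \<longleftrightarrow> i \<le> length a"
  using assms nth_mem[of "i - 1" a] by (auto simp: part_def is_partition_def)

lemma part_mono: assumes "is_partition n a" "1 \<le> i" "i \<le> j"
  shows "part a j \<le> part a i"
proof (cases "j \<le> length a")
  case True
  then show ?thesis
  proof (cases "i = j")
    case False
    then have "a ! (j - 1) \<le> a ! (i - 1)"
      using assms True unfolding is_partition_def sorted_wrt_iff_nth_less by auto
    then show ?thesis using assms True by (simp add: part_def)
  qed simp
next
  case False
  then show ?thesis by (simp add: part_def)
qed

theorem corollary2p7:
  fixes n q :: nat and s :: "nat \<Rightarrow> nat" and a :: "nat list"
  assumes "is_partition n a"
    and "1 \<le> q"
    and "diag_seq_is a (diag_shape q s)"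
  shows "(a \<noteq> alpha_bar q s \<longrightarrow>
            (\<exists>i. 1 \<le> i \<and> i \<le> length a \<and> part a i = part a (i + 1)))
       \<and> (a \<noteq> conj_part (alpha_bar q s) \<longrightarrow>
            (\<exists>i. 1 \<le> i \<and> i \<le> length a \<and> int (part a i) - int (part a (i + 1)) > 1))"
proof -
  define p where "p = part a"
  define t where "t = length a"
  note P = assms(1)
  have pos: "\<And>i. 1 \<le> i \<Longrightarrow> (0 < p i \<longleftrightarrow> i \<le> t)"
    unfolding p_def t_def using part_pos[OF P] by simp
  have mono: "\<And>i j. 1 \<le> i \<Longrightarrow> i \<le> j \<Longrightarrow> p j \<le> p i"
    unfolding p_def using part_mono[OF P] by simp
  have dg: "\<And>k. 1 \<le> k \<Longrightarrow> card {i. 1 \<le> i \<and> i \<le> k \<and> p i + i - 1 \<ge> k}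
      = (if k \<le> length (diag_shape q s) then diag_shape q s ! (k-1) else 0)"
    using assms(3) unfolding diag_seq_is_def diag_def p_def by simp
  have c1: "\<exists>i. 1 \<le> i \<and> i \<le> length a \<and> part a i = part a (i + 1)" if ne: "a \<noteq> alpha_bar q s"
  proof (rule ccontr)
    assume "\<not> ?thesis"
    then have neq: "\<And>i. 1 \<le> i \<Longrightarrow> i \<le> t \<Longrightarrow> p i \<noteq> p (Suc i)"
      unfolding p_def t_def by auto
    have strict: "\<And>i. 1 \<le> i \<Longrightarrow> i < t \<Longrightarrow> p (Suc i) < p i"
      using neq mono by (metis le_SucI le_less less_imp_le_nat order_refl)
    from core[OF pos strict dg assms(2)]
    have tq: "t = q" and vals: "\<And>i. 1 \<le> i \<Longrightarrow> i \<le> q \<Longrightarrow> p i = q - i + 1 + (\<Sum>k=i..q. s k)"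
      by auto
    have "a = alpha_bar q s"
    proof (rule nth_equalityI)
      show "length a = length (alpha_bar q s)" using tq by (simp add: t_def alpha_bar_def)
    next
      fix m assume "m < length a"
      then have m: "m < q" using tq t_def by simp
      have "a ! m = p (Suc m)" using m tq by (simp add: p_def t_def part_def)
      also have "\<dots> = q - Suc m + 1 + (\<Sum>k=Suc m..q. s k)" using vals[of "Suc m"] m by simp
      also have "\<dots> = alpha_bar q s ! m" using m by (simp add: alpha_bar_def nth_append del: upt_Suc)
      finally show "a ! m = alpha_bar q s ! m" .
    qed
    then show False using ne by simp
  qed
  have c2: "\<exists>i. 1 \<le> i \<and> i \<le> length a \<and> int (part a i) - int (part a (i + 1)) > 1"
    if ne: "a \<noteq> conj_part (alpha_bar q s)"
  proof (rule ccontr)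
    assume "\<not> ?thesis"
    then have step: "\<And>i. 1 \<le> i \<Longrightarrow> i \<le> t \<Longrightarrow> p i \<le> p (Suc i) + 1"
      unfolding p_def t_def by force
    define c where "c j = card {i. 1 \<le> i \<and> i \<le> t \<and> j \<le> p i}" for j
    have gal: "j \<le> p i \<longleftrightarrow> i \<le> c j" if "1 \<le> i" "1 \<le> j" for i j
    proof
      assume ji: "j \<le> p i"
      then have "i \<le> t" using pos[of i] that by simp
      then have "{1..i} \<subseteq> {i. 1 \<le> i \<and> i \<le> t \<and> j \<le> p i}"
        using mono ji by (auto intro: le_trans)
      then have "card {1..i} \<le> c j" unfolding c_def by (intro card_mono) auto
      then show "i \<le> c j" by simp
    next
      assume ic: "i \<le> c j"
      show "j \<le> p i"
      proof (rule ccontr)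
        assume nj: "\<not> j \<le> p i"
        have "{i. 1 \<le> i \<and> i \<le> t \<and> j \<le> p i} \<subseteq> {1..i-1}"
        proof
          fix i' assume "i' \<in> {i. 1 \<le> i \<and> i \<le> t \<and> j \<le> p i}"
          then have i': "1 \<le> i'" "j \<le> p i'" by auto
          have "\<not> i \<le> i'" using mono[of i i'] that i' nj by auto
          then show "i' \<in> {1..i-1}" using i' by simp
        qed
        then have "c j \<le> card {1..i-1}" unfolding c_def by (intro card_mono) auto
        then show False using ic that by simp
      qed
    qed
    define T where "T = p 1"
    have cpos: "\<And>j. 1 \<le> j \<Longrightarrow> (0 < c j \<longleftrightarrow> j \<le> T)"
      using gal[of 1] unfolding T_def by auto
    have cstrict: "\<And>j. 1 \<le> j \<Longrightarrow> j < T \<Longrightarrow> c (Suc j) < c j"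
    proof -
      fix j assume j: "1 \<le> j" "j < T"
      define m where "m = c j"
      have m1: "1 \<le> m" using cpos[of j] j m_def by simp
      have jm: "j \<le> p m" using gal[of m j] m1 j m_def by simp
      have jm1: "\<not> j \<le> p (Suc m)" using gal[of "Suc m" j] j m_def by simp
      have mt: "m \<le> t" using pos[of m] m1 jm j by simp
      have "p m = j" using step[OF m1 mt] jm jm1 by simp
      then have "\<not> Suc j \<le> p m" by simp
      then show "c (Suc j) < c j" using gal[of m "Suc j"] m1 m_def by simp
    qed
    have cdg: "card {j. 1 \<le> j \<and> j \<le> k \<and> c j + j - 1 \<ge> k} = card {i. 1 \<le> i \<and> i \<le> k \<and> p i + i - 1 \<ge> k}"
      if k: "1 \<le> k" for k
    proof -
      let ?B = "{i. 1 \<le> i \<and> i \<le> k \<and> p i + i - 1 \<ge> k}"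
      let ?A = "{j. 1 \<le> j \<and> j \<le> k \<and> c j + j - 1 \<ge> k}"
      have inj: "inj_on (\<lambda>i. Suc k - i) ?B" by (auto simp: inj_on_def)
      have eq: "?A = (\<lambda>i. Suc k - i) ` ?B"
      proof
        show "?A \<subseteq> (\<lambda>i. Suc k - i) ` ?B"
        proof
          fix j assume "j \<in> ?A"
          then have j: "1 \<le> j" "j \<le> k" "c j + j - 1 \<ge> k" by auto
          define i where "i = Suc k - j"
          have i: "1 \<le> i" "i \<le> k" "j = Suc k - i" using j i_def by auto
          have "i \<le> c j" using j i_def by simp
          then have "j \<le> p i" using gal[of i j] i j by simp
          then have "i \<in> ?B" using i by simp
          then show "j \<in> (\<lambda>i. Suc k - i) ` ?B" using i by blast
        qed
      next
        show "(\<lambda>i. Suc k - i) ` ?B \<subseteq> ?A"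
        proof
          fix j assume "j \<in> (\<lambda>i. Suc k - i) ` ?B"
          then obtain i where i: "1 \<le> i" "i \<le> k" "p i + i - 1 \<ge> k" and ji: "j = Suc k - i" by auto
          have "j \<le> p i" using i ji by simp
          then have "i \<le> c j" using gal[of i j] i ji by simp
          then have "1 \<le> j \<and> j \<le> k \<and> c j + j - 1 \<ge> k" using i ji by arith
          then show "j \<in> ?A" by simp
        qed
      qed
      show ?thesis unfolding eq using card_image[OF inj] by simp
    qed
    have cdg2: "\<And>k. 1 \<le> k \<Longrightarrow> card {j. 1 \<le> j \<and> j \<le> k \<and> c j + j - 1 \<ge> k}
      = (if k \<le> length (diag_shape q s) then diag_shape q s ! (k-1) else 0)"
      using cdg dg by simp
    from core[OF cpos cstrict cdg2 assms(2)]
    have Tq: "T = q" and vals: "\<And>j. 1 \<le> j \<Longrightarrow> j \<le> q \<Longrightarrow> c j = q - j + 1 + (\<Sum>k=j..q. s k)"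
      by auto
    let ?ab = "alpha_bar q s"
    have abn: "?ab ! i = c (Suc i)" if "i < q" for i
      using that vals[of "Suc i"] by (simp add: alpha_bar_def nth_append del: upt_Suc)
    have abl: "length ?ab = q" by (simp add: alpha_bar_def)
    have ct: "c 1 = t"
    proof -
      have "{i. 1 \<le> i \<and> i \<le> t \<and> 1 \<le> p i} = {1..t}" using pos by (auto simp: Suc_le_eq)
      then show ?thesis unfolding c_def by simp
    qed
    have pab1: "part ?ab 1 = t" using abn[of 0] abl assms(2) ct by (simp add: part_def)
    have "a = conj_part ?ab"
    proof (rule nth_equalityI)
      show "length a = length (conj_part ?ab)" using pab1 by (simp add: conj_part_def t_def del: upt_Suc)
    next
      fix m assume mlen: "m < length a"
      have "conj_part ?ab ! m = length (filter (\<lambda>x. Suc m \<le> x) ?ab)"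
        using mlen pab1 t_def by (simp add: conj_part_def del: upt_Suc)
      also have "\<dots> = card {i. i < q \<and> Suc m \<le> ?ab ! i}"
        by (simp add: length_filter_conv_card abl)
      also have "{i. i < q \<and> Suc m \<le> ?ab ! i} = {i. i < p (Suc m)}"
      proof -
        have "p (Suc m) \<le> q" using mono[of 1 "Suc m"] Tq T_def by simp
        moreover have "Suc m \<le> c (Suc i) \<longleftrightarrow> Suc i \<le> p (Suc m)" for i
          using gal[of "Suc m" "Suc i"] by simp
        ultimately show ?thesis using abn by auto
      qed
      also have "card {i. i < p (Suc m)} = a ! m" using mlen by (simp add: p_def part_def)
      finally show "a ! m = conj_part ?ab ! m" by simp
    qed
    then show False using ne by simp
  qed
  show ?thesis using c1 c2 by blast
qed

end
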